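(* Let $\eta>0$, $n\ge 1$, $b\in\{1,\dots,n\}$, and let $x_i=(a_i,y_i)$, $i=1,\dots,n$, with $a_i\in\mathbb{R}^d$, $y_i\in\mathbb{R}$. Let $(\Omega_k)_{k\ge1}$ be i.i.d. uniformly random subsets of $\{1,\dots,n\}$ of cardinality $b$, and set $H_k:=\sum_{i\in\Omega_k}a_ia_i^{\top}$, $q_k:=\sum_{i\in\Omega_k}a_iy_i$. Consider the Markov chain $\theta_k=\left(I-\frac{\eta}{b}H_k\right)\theta_{k-1}+\frac{\eta}{b}q_k$ on $\mathbb{R}^d$ with transition kernel $P$. Assume $\rho:=\mathbb{E}\left\Vert I-\frac{\eta}{b}H_1\right\Vert<1$. Then for every $k\in\mathbb{N}$ and all $\theta,\tilde\theta\in\mathbb{R}^d$, $$\mathcal{W}_1\big(P^k(\theta,\cdot),P^k(\tilde\theta,\cdot)\big)\le\rho^k\Vert\theta-\tilde\theta\Vert.$$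
   Context: This is SGD with batch size $b$ and step size $\eta$ for the quadratic loss $f(\theta,x_i)=(a_i^\top\theta-y_i)^2/2$. $\Vert\cdot\Vert$ on matrices is the operator norm. $P^k(\theta,\cdot)$ is the law of $\theta_k$ when $\theta_0=\theta$. $\mathcal{W}_1$ is the 1-Wasserstein distance: $\mathcal{W}_1(\mu,\nu)=\inf\mathbb{E}\Vert X-Y\Vert$ over couplings of $X\sim\mu$, $Y\sim\nu$. *)

theory Defs
  imports "HOL-Analysis.Analysis" "HOL-Probability.Probability"
begin

text \<open>Mini-batch SGD for the quadratic loss. Data points x_i = (a i, y i), i = 1..n.\<close>

definition batches :: "nat \<Rightarrow> nat \<Rightarrow> nat set set" where
  "batches n b = {S. S \<subseteq> {1..n} \<and> card S = b}"

text \<open>Law of a uniformly random batch Omega_k.\<close>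
definition batch_pmf :: "nat \<Rightarrow> nat \<Rightarrow> nat set pmf" where
  "batch_pmf n b = pmf_of_set (batches n b)"

text \<open>H = sum_{i in S} a_i a_i^T\<close>
definition sgd_H :: "(nat \<Rightarrow> real^'d) \<Rightarrow> nat set \<Rightarrow> real^'d^'d" where
  "sgd_H a S = (\<Sum>i\<in>S. (\<chi> j k. a i $ j * a i $ k))"

text \<open>q = sum_{i in S} a_i y_i\<close>
definition sgd_q :: "(nat \<Rightarrow> real^'d) \<Rightarrow> (nat \<Rightarrow> real) \<Rightarrow> nat set \<Rightarrow> real^'d" where
  "sgd_q a y S = (\<Sum>i\<in>S. y i *\<^sub>R a i)"

text \<open>The iteration matrix I - (eta/b) H.\<close>
definition sgd_M :: "real \<Rightarrow> nat \<Rightarrow> (nat \<Rightarrow> real^'d) \<Rightarrow> nat set \<Rightarrow> real^'d^'d" where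
  "sgd_M \<eta> b a S = mat 1 - (\<eta> / real b) *\<^sub>R sgd_H a S"

definition sgd_step :: "real \<Rightarrow> nat \<Rightarrow> (nat \<Rightarrow> real^'d) \<Rightarrow> (nat \<Rightarrow> real) \<Rightarrow> nat set \<Rightarrow> real^'d \<Rightarrow> real^'d" where
  "sgd_step \<eta> b a y S \<theta> = sgd_M \<eta> b a S *v \<theta> + (\<eta> / real b) *\<^sub>R sgd_q a y S"

text \<open>Transition kernel P(theta, .) of the Markov chain.\<close>
definition sgd_kernel :: "real \<Rightarrow> nat \<Rightarrow> nat \<Rightarrow> (nat \<Rightarrow> real^'d) \<Rightarrow> (nat \<Rightarrow> real) \<Rightarrow> real^'d \<Rightarrow> (real^'d) pmf" where
  "sgd_kernel \<eta> n b a y \<theta> = map_pmf (\<lambda>S. sgd_step \<eta> b a y S \<theta>) (batch_pmf n b)"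

text \<open>k-step kernel P^k(theta, .) = law of theta_k given theta_0 = theta.\<close>
fun sgd_kernel_pow :: "real \<Rightarrow> nat \<Rightarrow> nat \<Rightarrow> (nat \<Rightarrow> real^'d) \<Rightarrow> (nat \<Rightarrow> real) \<Rightarrow> nat \<Rightarrow> real^'d \<Rightarrow> (real^'d) pmf" where
  "sgd_kernel_pow \<eta> n b a y 0 \<theta> = return_pmf \<theta>"
| "sgd_kernel_pow \<eta> n b a y (Suc k) \<theta> = bind_pmf (sgd_kernel_pow \<eta> n b a y k \<theta>) (sgd_kernel \<eta> n b a y)"

text \<open>1-Wasserstein distance between discrete laws: infimum over couplings of E||X - Y||
  (extended-real valued, so no integrability side conditions).\<close>
definition wasserstein1 :: "('a::real_normed_vector) pmf \<Rightarrow> 'a pmf \<Rightarrow> ennreal" where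
  "wasserstein1 \<mu> \<nu> = (INF \<gamma> \<in> {\<gamma>. map_pmf fst \<gamma> = \<mu> \<and> map_pmf snd \<gamma> = \<nu>}.
      \<integral>\<^sup>+ z. ennreal (norm (fst z - snd z)) \<partial>measure_pmf \<gamma>)"

text \<open>rho = E || I - (eta/b) H_1 ||, operator norm.\<close>
definition sgd_rho :: "real \<Rightarrow> nat \<Rightarrow> nat \<Rightarrow> (nat \<Rightarrow> real^'d) \<Rightarrow> real" where
  "sgd_rho \<eta> n b a = measure_pmf.expectation (batch_pmf n b) (\<lambda>S. onorm (\<lambda>v. sgd_M \<eta> b a S *v v))"

end

theory Submission
  imports Defs
begin

fun sgd_cpl :: "real \<Rightarrow> nat \<Rightarrow> nat \<Rightarrow> (nat \<Rightarrow> real^'d) \<Rightarrow> (nat \<Rightarrow> real) \<Rightarrow> nat \<Rightarrow> real^'d \<Rightarrow> real^'d \<Rightarrow> ((real^'d) \<times> (real^'d)) pmf" where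
  "sgd_cpl \<eta> n b a y 0 u v = return_pmf (u, v)"
| "sgd_cpl \<eta> n b a y (Suc k) u v = bind_pmf (sgd_cpl \<eta> n b a y k u v)
     (\<lambda>z. map_pmf (\<lambda>S. (sgd_step \<eta> b a y S (fst z), sgd_step \<eta> b a y S (snd z))) (batch_pmf n b))"

lemma cpl_fst: "map_pmf fst (sgd_cpl \<eta> n b a y k u v) = sgd_kernel_pow \<eta> n b a y k u"
proof (induction k)
  case (Suc k)
  show ?case by (simp add: Suc.IH[symmetric] map_bind_pmf bind_map_pmf map_pmf_comp sgd_kernel_def o_def)
qed simp

lemma cpl_snd: "map_pmf snd (sgd_cpl \<eta> n b a y k u v) = sgd_kernel_pow \<eta> n b a y k v"
proof (induction k)
  case (Suc k)
  show ?case by (simp add: Suc.IH[symmetric] map_bind_pmf bind_map_pmf map_pmf_comp sgd_kernel_def o_def)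
qed simp

lemma cpl_bound:
  assumes fin: "finite (set_pmf (batch_pmf n b))"
  shows "(\<integral>\<^sup>+ z. ennreal (norm (fst z - snd z)) \<partial>measure_pmf (sgd_cpl \<eta> n b a y k u v))
     \<le> ennreal (sgd_rho \<eta> n b a ^ k * norm (u - v))"
proof (induction k)
  case 0
  then show ?case by simp
next
  case (Suc k)
  let ?o = "\<lambda>S. onorm (\<lambda>w. sgd_M \<eta> b a S *v w)"
  let ?r = "sgd_rho \<eta> n b a"
  have onn: "\<And>S. 0 \<le> ?o S" by (rule onorm_pos_le) simp
  have rnn: "0 \<le> ?r" unfolding sgd_rho_def by (rule integral_nonneg_AE) (simp add: onn)
  have rho_eq: "(\<integral>\<^sup>+ S. ennreal (?o S) \<partial>measure_pmf (batch_pmf n b)) = ennreal ?r"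
    unfolding sgd_rho_def
    by (rule nn_integral_eq_integral) (auto simp: integrable_measure_pmf_finite[OF fin] onn)
  have step: "norm (sgd_step \<eta> b a y S p - sgd_step \<eta> b a y S q) \<le> ?o S * norm (p - q)" for S p q
  proof -
    have "sgd_step \<eta> b a y S p - sgd_step \<eta> b a y S q = sgd_M \<eta> b a S *v (p - q)"
      by (simp add: sgd_step_def matrix_vector_mult_diff_distrib)
    then show ?thesis by (simp add: onorm[OF matrix_vector_mul_bounded_linear])
  qed
  have "(\<integral>\<^sup>+ z. ennreal (norm (fst z - snd z)) \<partial>measure_pmf (sgd_cpl \<eta> n b a y (Suc k) u v))
      = (\<integral>\<^sup>+ z. \<integral>\<^sup>+ S. ennreal (norm (sgd_step \<eta> b a y S (fst z) - sgd_step \<eta> b a y S (snd z)))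
            \<partial>measure_pmf (batch_pmf n b) \<partial>measure_pmf (sgd_cpl \<eta> n b a y k u v))"
    by simp
  also have "\<dots> \<le> (\<integral>\<^sup>+ z. \<integral>\<^sup>+ S. ennreal (?o S) * ennreal (norm (fst z - snd z))
            \<partial>measure_pmf (batch_pmf n b) \<partial>measure_pmf (sgd_cpl \<eta> n b a y k u v))"
    by (intro nn_integral_mono) (simp add: step ennreal_mult[symmetric] onn)
  also have "\<dots> = (\<integral>\<^sup>+ z. ennreal ?r * ennreal (norm (fst z - snd z))
            \<partial>measure_pmf (sgd_cpl \<eta> n b a y k u v))"
    by (simp add: nn_integral_multc rho_eq)
  also have "\<dots> = ennreal ?r * (\<integral>\<^sup>+ z. ennreal (norm (fst z - snd z))
            \<partial>measure_pmf (sgd_cpl \<eta> n b a y k u v))"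
    by (simp add: nn_integral_cmult)
  also have "\<dots> \<le> ennreal ?r * ennreal (?r ^ k * norm (u - v))"
    by (intro mult_left_mono Suc.IH) simp
  also have "\<dots> = ennreal (?r ^ Suc k * norm (u - v))"
    by (simp add: ennreal_mult[symmetric] rnn)
  finally show ?case .
qed

theorem lemma3p1:
  fixes \<eta> :: real and n b :: nat and a :: "nat \<Rightarrow> real^'d" and y :: "nat \<Rightarrow> real"
    and k :: nat and \<theta> \<theta>' :: "real^'d"
  assumes "\<eta> > 0" and "n \<ge> 1" and "1 \<le> b" and "b \<le> n"
    and "sgd_rho \<eta> n b a < 1"
  shows "wasserstein1 (sgd_kernel_pow \<eta> n b a y k \<theta>) (sgd_kernel_pow \<eta> n b a y k \<theta>')
           \<le> ennreal (sgd_rho \<eta> n b a ^ k * norm (\<theta> - \<theta>'))"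
proof -
  have finB: "finite (batches n b)" unfolding batches_def
    by (rule finite_subset[of _ "Pow {1..n}"]) auto
  have neB: "batches n b \<noteq> {}"
  proof -
    have "{1..b} \<in> batches n b" using assms unfolding batches_def by auto
    then show ?thesis by blast
  qed
  have fin: "finite (set_pmf (batch_pmf n b))"
    unfolding batch_pmf_def using finB neB by simp
  have "wasserstein1 (sgd_kernel_pow \<eta> n b a y k \<theta>) (sgd_kernel_pow \<eta> n b a y k \<theta>')
      \<le> (\<integral>\<^sup>+ z. ennreal (norm (fst z - snd z)) \<partial>measure_pmf (sgd_cpl \<eta> n b a y k \<theta> \<theta>'))"
    unfolding wasserstein1_def by (rule INF_lower) (simp add: cpl_fst cpl_snd)
  also have "\<dots> \<le> ennreal (sgd_rho \<eta> n b a ^ k * norm (\<theta> - \<theta>'))"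
    by (rule cpl_bound[OF fin])
  finally show ?thesis .
qed

end
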